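(* Consider an instance of \textsc{Min-Lin-Eq$(q)$-Full} on the complete graph with $n$ vertices and $m=\binom n2$ edges, let $\mathrm{OPT_{val}}$ be its optimal value, let $\varepsilon=\mathrm{OPT_{val}}/m$ and assume $\varepsilon<\frac12$. Let $\nu=2/(1-2\varepsilon)$. Then the Voting Algorithm returns an assignment with at most $(\varepsilon+2\varepsilon^2\nu(2+\nu)+o(1))\,m$ unsatisfied constraints (where $o(1)$ is with respect to $n\to\infty$).
   Context: \textsc{Min-Lin-Eq$(q)$-Full}: given a complete simple graph $G=(V,E)$, $n=|V|$, $m=\binom n2$, a positive integer $q$, and for each ordered pair $(u,v)$ of distinct vertices an integer $c_{uv}\in\{0,\dots,q-1\}$ with $c_{vu}\equiv -c_{uv}\pmod q$, each edge $uv$ carries the constraint $x_u-x_v\equiv c_{uv}\pmod q$ on assignments $x:V\to\{0,\dots,q-1\}$; the goal is to minimize the number of violated constraints, whose minimum is $\mathrm{OPT_{val}}$. Voting Algorithm: for each choice of pivot $p\in V$: (1) label $p$ with $0$ and give each vertex $v\neq p$ the temporary label $\mathrm{TEMP}(v)=c_{vp}$; (2) for each vertex $v$, every vertex $u\notin\{p,v\}$ casts the vote $(c_{vu}+\mathrm{TEMP}(u))\bmod q$ for $v$; (3) each vertex $v$ receives as final label $\mathrm{FINAL}(v)$ a label occurring most often among its votes (ties broken arbitrarily). (4) Output, among all choices of $p$, the FINAL assignment violating the fewest constraints. *)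

theory Defs
  imports Complex_Main "HOL-Number_Theory.Cong"
begin

text \<open>Instances of Min-Lin-Eq(q)-Full on the complete graph with vertex set {0..<n}.
  The label of the ordered pair (u,v) is c u v; edge uv carries x u - x v = c u v (mod q).\<close>

definition valid_instance :: "int \<Rightarrow> nat \<Rightarrow> (nat \<Rightarrow> nat \<Rightarrow> int) \<Rightarrow> bool" where
  "valid_instance q n c \<longleftrightarrow> 0 < q \<and>
     (\<forall>u<n. \<forall>v<n. u \<noteq> v \<longrightarrow> 0 \<le> c u v \<and> c u v < q \<and> [c v u = - c u v] (mod q))"

definition assignment :: "int \<Rightarrow> nat \<Rightarrow> (nat \<Rightarrow> int) \<Rightarrow> bool" where
  "assignment q n x \<longleftrightarrow> (\<forall>v<n. 0 \<le> x v \<and> x v < q)"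

definition violations :: "int \<Rightarrow> nat \<Rightarrow> (nat \<Rightarrow> nat \<Rightarrow> int) \<Rightarrow> (nat \<Rightarrow> int) \<Rightarrow> nat" where
  "violations q n c x = card {(u, v). u < v \<and> v < n \<and> \<not> [x u - x v = c u v] (mod q)}"

definition opt_val :: "int \<Rightarrow> nat \<Rightarrow> (nat \<Rightarrow> nat \<Rightarrow> int) \<Rightarrow> nat" where
  "opt_val q n c = Min (violations q n c ` {x. assignment q n x})"

text \<open>Voting algorithm with pivot p: temporary labels, votes, and the admissible final labelings
  (any most frequent vote, ties broken arbitrarily).\<close>
definition temp_label :: "(nat \<Rightarrow> nat \<Rightarrow> int) \<Rightarrow> nat \<Rightarrow> nat \<Rightarrow> int" where
  "temp_label c p u = (if u = p then 0 else c u p)"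

definition vote_count :: "int \<Rightarrow> nat \<Rightarrow> (nat \<Rightarrow> nat \<Rightarrow> int) \<Rightarrow> nat \<Rightarrow> nat \<Rightarrow> int \<Rightarrow> nat" where
  "vote_count q n c p v a =
     card {u. u < n \<and> u \<noteq> p \<and> u \<noteq> v \<and> (c v u + temp_label c p u) mod q = a}"

definition voting_final :: "int \<Rightarrow> nat \<Rightarrow> (nat \<Rightarrow> nat \<Rightarrow> int) \<Rightarrow> nat \<Rightarrow> (nat \<Rightarrow> int) \<Rightarrow> bool" where
  "voting_final q n c p F \<longleftrightarrow> assignment q n F \<and>
     (\<forall>v<n. \<forall>a. 0 \<le> a \<and> a < q \<longrightarrow> vote_count q n c p v a \<le> vote_count q n c p v (F v))"

text \<open>Number of constraints violated by the algorithm's output, given the final labelings Fs p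
  obtained for each pivot p (the best one is output).\<close>
definition voting_output_cost :: "int \<Rightarrow> nat \<Rightarrow> (nat \<Rightarrow> nat \<Rightarrow> int) \<Rightarrow> (nat \<Rightarrow> nat \<Rightarrow> int) \<Rightarrow> nat" where
  "voting_output_cost q n c Fs = Min ((\<lambda>p. violations q n c (Fs p)) ` {..<n})"

end

theory Submission
  imports Defs
begin


definition bad :: "int \<Rightarrow> (nat\<Rightarrow>nat\<Rightarrow>int) \<Rightarrow> (nat\<Rightarrow>int) \<Rightarrow> nat \<Rightarrow> nat \<Rightarrow> bool" where
  "bad q c z u v \<longleftrightarrow> u \<noteq> v \<and> \<not> [z u - z v = c u v] (mod q)"

definition deg :: "int \<Rightarrow> nat \<Rightarrow> (nat\<Rightarrow>nat\<Rightarrow>int) \<Rightarrow> (nat\<Rightarrow>int) \<Rightarrow> nat \<Rightarrow> nat" where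
  "deg q n c z v = card {u. u < n \<and> bad q c z u v}"

lemma valid_dvd:
  assumes "valid_instance q n c" "u < n" "v < n" "u \<noteq> v"
  shows "q dvd (c v u + c u v)" "0 \<le> c u v" "c u v < q" "0 < q"
  using assms unfolding valid_instance_def cong_iff_dvd_diff by auto

lemma dvd_iff_of_diff:
  fixes q :: int
  assumes "q dvd (X - Y)"
  shows "q dvd X \<longleftrightarrow> q dvd Y"
proof
  assume "q dvd X"
  from dvd_diff[OF this assms] have "q dvd (X - (X - Y))" .
  then show "q dvd Y" by simp
next
  assume "q dvd Y"
  from dvd_add[OF this assms] have "q dvd (Y + (X - Y))" .
  then show "q dvd X" by simp
qed

lemma bad_sym:
  assumes "valid_instance q n c" "u < n" "v < n"
  shows "bad q c z u v \<longleftrightarrow> bad q c z v u"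
proof (cases "u = v")
  case False
  have d: "q dvd (c v u + c u v)" using valid_dvd[OF assms False] by blast
  have e: "(z v - z u - c v u) - (- (z u - z v - c u v)) = - (c v u + c u v)" by simp
  have "q dvd ((z v - z u - c v u) - (- (z u - z v - c u v)))" unfolding e dvd_minus_iff by (rule d)
  then have "q dvd (z v - z u - c v u) \<longleftrightarrow> q dvd (- (z u - z v - c u v))" by (rule dvd_iff_of_diff)
  then have "q dvd (z v - z u - c v u) \<longleftrightarrow> q dvd (z u - z v - c u v)" by (simp only: dvd_minus_iff)
  then show ?thesis unfolding bad_def cong_iff_dvd_diff using False by auto
qed (simp add: bad_def)

lemma card_as_sum:
  assumes "finite X"
  shows "card {u\<in>X. P u} = (\<Sum>u\<in>X. if P u then 1 else (0::nat))"
proof -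
  have "card {u\<in>X. P u} = (\<Sum>u\<in>{u\<in>X. P u}. (1::nat))" by simp
  also have "\<dots> = (\<Sum>u\<in>X. if P u then 1 else (0::nat))" by (rule sum.inter_filter[OF assms])
  finally show ?thesis .
qed

lemma sum_card_swap:
  assumes "finite X" "finite Y" "\<And>u v. u \<in> X \<Longrightarrow> v \<in> Y \<Longrightarrow> P u v = P v u"
  shows "(\<Sum>v\<in>Y. card {u\<in>X. P u v}) = (\<Sum>v\<in>X. card {u\<in>Y. P u v})"
proof -
  have "(\<Sum>v\<in>Y. card {u\<in>X. P u v}) = (\<Sum>v\<in>Y. \<Sum>u\<in>X. if P u v then 1 else 0)"
    by (intro sum.cong refl) (rule card_as_sum[OF assms(1)])
  also have "\<dots> = (\<Sum>u\<in>X. \<Sum>v\<in>Y. if P u v then 1 else 0)"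
    by (rule sum.swap)
  also have "\<dots> = (\<Sum>u\<in>X. \<Sum>v\<in>Y. if P v u then 1 else 0)"
    using assms(3) by (intro sum.cong refl) auto
  also have "\<dots> = (\<Sum>v\<in>X. card {u\<in>Y. P u v})"
    by (intro sum.cong refl) (rule card_as_sum[OF assms(2), symmetric])
  finally show ?thesis .
qed

lemma sum_deg:
  assumes "valid_instance q n c"
  shows "(\<Sum>v<n. deg q n c z v) = 2 * violations q n c z"
proof -
  define V where "V = {(u, v). u < v \<and> v < n \<and> bad q c z u v}"
  have cg: "\<And>u v. (u < v \<and> v < n \<and> bad q c z u v) = (u < v \<and> v < n \<and> \<not> [z u - z v = c u v] (mod q))"
    unfolding bad_def by auto
  have VV: "V = {(u, v). u < v \<and> v < n \<and> \<not> [z u - z v = c u v] (mod q)}"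
    unfolding V_def cg ..
  have "V \<subseteq> {..<n} \<times> {..<n}" unfolding V_def by auto
  then have fV: "finite V" by (rule finite_subset) simp
  have "(\<Sum>v<n. deg q n c z v) = card (SIGMA v:{..<n}. {u. u < n \<and> bad q c z u v})"
    unfolding deg_def by (subst card_SigmaI) auto
  also have "(SIGMA v:{..<n}. {u. u < n \<and> bad q c z u v}) = prod.swap ` V \<union> V"
  proof (rule set_eqI, clarify)
    fix a b
    have sy: "a < n \<Longrightarrow> b < n \<Longrightarrow> bad q c z b a = bad q c z a b" using bad_sym[OF assms, of b a z] .
    have 1: "(a,b) \<in> (SIGMA v:{..<n}. {u. u < n \<and> bad q c z u v}) \<longleftrightarrow> a < n \<and> b < n \<and> bad q c z b a"
      by simp
    have 2: "(a,b) \<in> prod.swap ` V \<longleftrightarrow> (b,a) \<in> V"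
      by (rule pair_in_swap_image)
    have 3: "(b,a) \<in> V \<longleftrightarrow> b < a \<and> a < n \<and> bad q c z b a" unfolding V_def by simp
    have 4: "(a,b) \<in> V \<longleftrightarrow> a < b \<and> b < n \<and> bad q c z a b" unfolding V_def by simp
    have 5: "bad q c z b a \<Longrightarrow> a \<noteq> b" unfolding bad_def by auto
    show "((a,b) \<in> (SIGMA v:{..<n}. {u. u < n \<and> bad q c z u v})) = ((a,b) \<in> prod.swap ` V \<union> V)"
      unfolding Un_iff 1 2 3 4
    proof (rule iffI)
      assume L: "a < n \<and> b < n \<and> bad q c z b a"
      then have "a \<noteq> b" using 5 by blast
      then consider "b < a" | "a < b" by linarith
      then show "b < a \<and> a < n \<and> bad q c z b a \<or> a < b \<and> b < n \<and> bad q c z a b"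
      proof cases
        case 1 then show ?thesis using L by blast
      next
        case 2
        have "bad q c z a b" using L sy by blast
        then show ?thesis using 2 L by blast
      qed
    next
      assume "b < a \<and> a < n \<and> bad q c z b a \<or> a < b \<and> b < n \<and> bad q c z a b"
      then show "a < n \<and> b < n \<and> bad q c z b a"
      proof (elim disjE)
        assume H: "b < a \<and> a < n \<and> bad q c z b a"
        then show ?thesis by (meson order.strict_trans)
      next
        assume H: "a < b \<and> b < n \<and> bad q c z a b"
        then have "a < n" by simp
        then have "bad q c z b a" using H sy by blast
        then show ?thesis using H \<open>a < n\<close> by blast
      qed
    qed
  qed
  also have "card (prod.swap ` V \<union> V) = card V + card V"
  proof -
    have "prod.swap ` V \<inter> V = {}"
    proof (rule equals0I)
      fix y assume y: "y \<in> prod.swap ` V \<inter> V"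
      obtain a b where ab: "y = (a, b)" by fastforce
      have "(b, a) \<in> V" "(a, b) \<in> V" using y unfolding ab by simp_all
      then show False unfolding V_def by simp
    qed
    moreover have "finite (prod.swap ` V)" using fV by simp
    moreover have "card (prod.swap ` V) = card V" by (rule card_image) simp
    ultimately show ?thesis using fV by (simp add: card_Un_disjoint)
  qed
  finally show ?thesis unfolding violations_def VV[symmetric] by simp
qed


lemma split_basics:
  assumes U: "N \<union> B = {..<(n::nat)}"
  shows "finite N" "finite B" "\<And>u. u < n \<longleftrightarrow> u \<in> N \<or> u \<in> B"
proof -
  have "N \<subseteq> {..<n}" using Un_upper1[of N B] unfolding U .
  then show "finite N" using finite_subset by blast
  have "B \<subseteq> {..<n}" using Un_upper2[of B N] unfolding U .
  then show "finite B" using finite_subset by blast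
  fix u
  have "u \<in> N \<union> B \<longleftrightarrow> u \<in> {..<n}" unfolding U ..
  then show "u < n \<longleftrightarrow> u \<in> N \<or> u \<in> B" by simp
qed

lemma split2:
  assumes U: "N \<union> B = {..<(n::nat)}" and D: "N \<inter> B = {}"
  shows "card {u. u < n \<and> P u} = card {u\<in>N. P u} + card {u\<in>B. P u}"
proof -
  note sb = split_basics[OF U]
  have "{u. u < n \<and> P u} = {u\<in>N. P u} \<union> {u\<in>B. P u}" using sb(3) by blast
  moreover have "{u\<in>N. P u} \<inter> {u\<in>B. P u} = {}" using D by blast
  moreover have "finite {u\<in>N. P u}" "finite {u\<in>B. P u}" using sb(1,2) by simp_all
  ultimately show ?thesis by (simp add: card_Un_disjoint)
qed

lemma split4:
  assumes U: "N \<union> B = {..<(n::nat)}" and D: "N \<inter> B = {}"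
  shows "(\<Sum>v<n. card {u. u < n \<and> P u v}) =
    (\<Sum>v\<in>N. card {u\<in>N. P u v}) + (\<Sum>v\<in>B. card {u\<in>N. P u v}) +
    (\<Sum>v\<in>N. card {u\<in>B. P u v}) + (\<Sum>v\<in>B. card {u\<in>B. P u v})"
proof -
  note sb = split_basics[OF U]
  have c: "card {u. u < n \<and> P u v} = card {u\<in>N. P u v} + card {u\<in>B. P u v}" for v
    by (rule split2[OF U D])
  have "(\<Sum>v<n. card {u. u < n \<and> P u v}) = (\<Sum>v\<in>N \<union> B. card {u. u < n \<and> P u v})"
    unfolding U ..
  also have "\<dots> = (\<Sum>v\<in>N. card {u. u < n \<and> P u v}) + (\<Sum>v\<in>B. card {u. u < n \<and> P u v})"
    using sb(1,2) D by (rule sum.union_disjoint)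
  also have "(\<Sum>v\<in>N. card {u. u < n \<and> P u v}) = (\<Sum>v\<in>N. card {u\<in>N. P u v}) + (\<Sum>v\<in>N. card {u\<in>B. P u v})"
    unfolding c by (rule sum.distrib)
  also have "(\<Sum>v\<in>B. card {u. u < n \<and> P u v}) = (\<Sum>v\<in>B. card {u\<in>N. P u v}) + (\<Sum>v\<in>B. card {u\<in>B. P u v})"
    unfolding c by (rule sum.distrib)
  finally show ?thesis by (simp only: ac_simps)
qed

lemma card_pairs: "card {(u, v). u < v \<and> v < (n::nat)} = n choose 2"
proof (induction n)
  case 0 then show ?case by simp
next
  case (Suc n)
  have e: "{(u, v). u < v \<and> v < Suc n} = {(u, v). u < v \<and> v < n} \<union> (\<lambda>u. (u, n)) ` {..<n}"
    by auto
  have f: "finite {(u, v). u < v \<and> v < n}"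
    by (rule finite_subset[of _ "{..<n} \<times> {..<n}"]) auto
  have "card {(u, v). u < v \<and> v < Suc n} = card {(u, v). u < v \<and> v < n} + card ((\<lambda>u. (u, n)) ` {..<n})"
    unfolding e using f by (subst card_Un_disjoint) auto
  also have "card ((\<lambda>u. (u, n)) ` {..<n}) = n" by (subst card_image) (auto simp: inj_on_def)
  finally have X: "card {(u, v). u < v \<and> v < Suc n} = card {(u, v). u < v \<and> v < n} + n" .
  moreover have "Suc n choose 2 = (n choose 1) + (n choose 2)" using binomial_Suc_Suc[of n 1] by (simp only: Suc_1)
  moreover have "n choose 1 = n" by simp
  ultimately show ?case using Suc.IH by linarith
qed

lemma viol_le: "violations q n c z \<le> n choose 2"
  unfolding violations_def card_pairs[symmetric]
proof (rule card_mono)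
  show "finite {(u, v). u < v \<and> v < n}"
    by (rule finite_subset[of _ "{..<n} \<times> {..<n}"]) auto
  show "{(u, v). u < v \<and> v < n \<and> \<not> [z u - z v = c u v] (mod q)} \<subseteq> {(u, v). u < v \<and> v < n}"
    by blast
qed



lemma moddvd: "(q::int) dvd (a mod q - a)"
  by (metis mod_eq_dvd_iff mod_mod_trivial)

lemma lin1:
  fixes K G A Bq S :: nat
  assumes "A + Bq \<le> K" "K \<le> G + S" "G \<le> Bq" "G \<le> A"
  shows "K \<le> 2 * S"
  using assms by linarith

lemma comb:
  assumes val: "valid_instance q n c" and n2: "2 \<le> n"
    and vf: "\<forall>p<n. voting_final q n c p (Fs p)"
  shows "\<exists>D b. n * D \<le> 2 * opt_val q n c \<and> b * (n - 2) \<le> 4 * opt_val q n c + 2 * b * D \<and>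
     voting_output_cost q n c Fs \<le> opt_val q n c + b * b + b * (2 * D + 1) \<and> b \<le> n"
proof -
  have q0: "0 < q" using val unfolding valid_instance_def by blast
  define A where "A = {x. assignment q n x}"
  have fin: "finite (violations q n c ` A)"
    by (rule finite_subset[of _ "{..n choose 2}"]) (auto simp: viol_le)
  have ne: "(\<lambda>_. 0) \<in> A" unfolding A_def assignment_def using q0 by simp
  have "opt_val q n c \<in> violations q n c ` A" unfolding opt_val_def A_def[symmetric]
    using fin ne by (intro Min_in) auto
  then obtain x where xO: "violations q n c x = opt_val q n c" by auto
  define OP where "OP = opt_val q n c"
  define d where "d = deg q n c x"
  have sd: "(\<Sum>v<n. d v) = 2 * OP" using sum_deg[OF val, of x] xO unfolding d_def OP_def by simp
  obtain p where p: "p < n" "\<forall>v<n. d p \<le> d v"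
  proof -
    have "0 \<in> {..<n}" using n2 by simp
    then have "{..<n} \<noteq> {}" by blast
    then have "Min (d ` {..<n}) \<in> d ` {..<n}" by (intro Min_in) auto
    then obtain p where "p < n" "d p = Min (d ` {..<n})" by auto
    moreover have "\<forall>v<n. Min (d ` {..<n}) \<le> d v" by auto
    ultimately show ?thesis using that by auto
  qed
  have nD: "n * d p \<le> 2 * OP"
  proof -
    have "n * d p = (\<Sum>v<n. d p)" by simp
    also have "\<dots> \<le> (\<Sum>v<n. d v)" using p(2) by (intro sum_mono) auto
    finally show ?thesis using sd by simp
  qed
  define F where "F = Fs p"
  have vF: "voting_final q n c p F" using vf p(1) unfolding F_def by blast
  have Fmax: "\<And>v b. v < n \<Longrightarrow> 0 \<le> b \<Longrightarrow> b < q \<Longrightarrow> vote_count q n c p v b \<le> vote_count q n c p v (F v)"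
    using vF unfolding voting_final_def by blast
  define a where "a v = (x v - x p) mod q" for v
  define VS where "VS v b = {u. u < n \<and> u \<noteq> p \<and> u \<noteq> v \<and> (c v u + temp_label c p u) mod q = b}" for v b
  have vc: "vote_count q n c p v b = card (VS v b)" for v b unfolding vote_count_def VS_def by simp
  define W where "W v = {u. u < n \<and> u \<noteq> p \<and> u \<noteq> v}" for v
  have fW: "finite (W v)" for v unfolding W_def by simp
  have VSW: "VS v b \<subseteq> W v" for v b unfolding VS_def W_def by auto
  have fVS: "finite (VS v b)" for v b using fW VSW finite_subset by metis
  have cW: "card (W v) = n - 2" if "v < n" "v \<noteq> p" for v
  proof -
    have "W v = {..<n} - {p, v}" unfolding W_def by auto
    moreover have "card {p,v} = 2" using that by simp
    moreover have "{p, v} \<subseteq> {..<n}" using that p(1) by simp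
    ultimately show ?thesis by (simp add: card_Diff_subset)
  qed
  have dvd_bad: "q dvd (x u - x v - c u v)" if "\<not> bad q c x u v" "u \<noteq> v" for u v
    using that unfolding bad_def cong_iff_dvd_diff by simp
  have goodvote: "(c v u + temp_label c p u) mod q = a v"
    if "u < n" "v < n" "u \<noteq> p" "u \<noteq> v" "\<not> bad q c x u v" "\<not> bad q c x u p" for u v
  proof -
    have 1: "q dvd (c v u + c u v)" using valid_dvd[OF val that(1,2,4)] by blast
    have 2: "q dvd (x u - x v - c u v)" using dvd_bad that by blast
    have 3: "q dvd (x u - x p - c u p)" using dvd_bad that by blast
    have e: "c v u + c u p - (x v - x p) = (c v u + c u v) + (x u - x v - c u v) - (x u - x p - c u p)" by simp
    have "q dvd (c v u + c u p - (x v - x p))" unfolding e by (rule dvd_diff[OF dvd_add[OF 1 2] 3])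
    then show ?thesis unfolding a_def temp_label_def using that(3) by (simp add: mod_eq_dvd_iff)
  qed
  define G where "G v = {u \<in> W v. \<not> bad q c x u v \<and> \<not> bad q c x u p}" for v
  have fG: "finite (G v)" for v unfolding G_def using fW by simp
  have GV: "G v \<subseteq> VS v (a v)" if "v < n" for v unfolding G_def W_def VS_def using goodvote that by auto
  have cG: "n - 2 \<le> card (G v) + d v + d p" if "v < n" "v \<noteq> p" for v
  proof -
    have "W v \<subseteq> G v \<union> ({u. u < n \<and> bad q c x u v} \<union> {u. u < n \<and> bad q c x u p})"
      unfolding G_def W_def by auto
    then have "card (W v) \<le> card (G v \<union> ({u. u < n \<and> bad q c x u v} \<union> {u. u < n \<and> bad q c x u p}))"
      by (rule card_mono[rotated]) (simp add: fG)
    also have "\<dots> \<le> card (G v) + (card {u. u < n \<and> bad q c x u v} + card {u. u < n \<and> bad q c x u p})"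
      by (intro order.trans[OF card_Un_le] add_left_mono card_Un_le)
    finally show ?thesis using cW[OF that] unfolding d_def deg_def by simp
  qed
  have arange: "0 \<le> a v \<and> a v < q" for v unfolding a_def using q0 by simp
  have GA: "card (G v) \<le> card (VS v (a v))" if "v < n" for v
    using GV[OF that] fVS by (rule card_mono[rotated])
  have GF: "card (G v) \<le> card (VS v (F v))" if "v < n" for v
  proof -
    have "card (VS v (a v)) \<le> card (VS v (F v))" using Fmax[OF that] arange vc by metis
    then show ?thesis using GA[OF that] by linarith
  qed
  define B where "B = {v. v < n \<and> F v \<noteq> a v}"
  define N where "N = {..<n} - B"
  have pB: "p \<notin> B"
  proof
    assume "p \<in> B"
    then have Fp: "F p \<noteq> 0" unfolding B_def a_def by simp
    have all0: "(c p u + temp_label c p u) mod q = 0" if "u < n" "u \<noteq> p" for u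
    proof -
      have "q dvd (c p u + c u p)" using valid_dvd[OF val that(1) p(1) that(2)] by blast
      then show ?thesis unfolding temp_label_def using that(2) by simp
    qed
    have "VS p (F p) = {}" unfolding VS_def using all0 Fp by auto
    moreover have "VS p 0 = {u. u < n \<and> u \<noteq> p}" unfolding VS_def using all0 by auto
    moreover have "{u. u < n \<and> u \<noteq> p} \<noteq> {}"
    proof (cases "p = 0")
      case True then have "1 \<in> {u. u < n \<and> u \<noteq> p}" using n2 by simp
      then show ?thesis by blast
    next
      case False then have "0 \<in> {u. u < n \<and> u \<noteq> p}" using n2 by simp
      then show ?thesis by blast
    qed
    ultimately have "vote_count q n c p p (F p) < vote_count q n c p p 0"
      unfolding vc by (simp add: card_gt_0_iff)
    with Fmax[OF p(1), of 0] q0 show False by simp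
  qed
  have Bv: "v < n" "v \<noteq> p" "F v \<noteq> a v" if "v \<in> B" for v using that pB unfolding B_def by auto
  have Bbound: "n - 2 \<le> 2 * (d v + d p)" if "v \<in> B" for v
  proof -
    note v = Bv[OF that]
    have "VS v (F v) \<inter> VS v (a v) = {}" unfolding VS_def using v(3) by auto
    then have "card (VS v (F v)) + card (VS v (a v)) = card (VS v (F v) \<union> VS v (a v))"
      using fVS by (simp add: card_Un_disjoint)
    also have "\<dots> \<le> card (W v)" using VSW fW by (intro card_mono) auto
    finally have "card (VS v (F v)) + card (VS v (a v)) \<le> n - 2" using cW v by simp
    moreover have "n - 2 \<le> card (G v) + (d v + d p)" using cG[OF v(1,2)] by simp
    ultimately show ?thesis using GA[OF v(1)] GF[OF v(1)] by (rule lin1)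
  qed
  have Nbound: "card {u \<in> N. bad q c F u v} \<le> d v + 2 * d p + 1" if "v \<in> B" for v
  proof -
    note v = Bv[OF that]
    have sub: "{u \<in> N. bad q c F u v} \<subseteq> {p} \<union> {u. u < n \<and> bad q c x u p} \<union> (W v - VS v (F v))"
    proof
      fix u assume u: "u \<in> {u \<in> N. bad q c F u v}"
      show "u \<in> {p} \<union> {u. u < n \<and> bad q c x u p} \<union> (W v - VS v (F v))"
      proof (rule ccontr)
        assume H: "u \<notin> {p} \<union> {u. u < n \<and> bad q c x u p} \<union> (W v - VS v (F v))"
        from u have un: "u < n" "u \<notin> B" "bad q c F u v" unfolding N_def by auto
        then have uv: "u \<noteq> v" using that by auto
        from H un have up: "u \<noteq> p" "\<not> bad q c x u p" by auto
        with H un uv have uV: "u \<in> VS v (F v)" unfolding W_def by auto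
        have Fu: "F u = a u" using un unfolding B_def by auto
        have 1: "q dvd (F u - (x u - x p))" unfolding Fu a_def by (rule moddvd)
        have "(c v u + c u p) mod q = F v" using uV up(1) unfolding VS_def temp_label_def by auto
        then have 2: "q dvd (c v u + c u p - F v)" by (metis mod_eq_dvd_iff mod_mod_trivial)
        have 3: "q dvd (x u - x p - c u p)" using dvd_bad up by blast
        have 4: "q dvd (c v u + c u v)" using valid_dvd[OF val un(1) v(1) uv] by blast
        have e: "F u - F v - c u v = (F u - (x u - x p)) + (c v u + c u p - F v) + (x u - x p - c u p) - (c v u + c u v)"
          by simp
        have "q dvd (F u - F v - c u v)" unfolding e by (rule dvd_diff[OF dvd_add[OF dvd_add[OF 1 2] 3] 4])
        then have "\<not> bad q c F u v" unfolding bad_def cong_iff_dvd_diff by simp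
        with un show False by simp
      qed
    qed
    have "card {u \<in> N. bad q c F u v} \<le> card ({p} \<union> {u. u < n \<and> bad q c x u p} \<union> (W v - VS v (F v)))"
      by (rule card_mono[OF _ sub]) (simp add: fW)
    also have "\<dots> \<le> card ({p} \<union> {u. u < n \<and> bad q c x u p}) + card (W v - VS v (F v))"
      by (rule card_Un_le)
    also have "card ({p} \<union> {u. u < n \<and> bad q c x u p}) \<le> card {p} + card {u. u < n \<and> bad q c x u p}"
      by (rule card_Un_le)
    also have "card (W v - VS v (F v)) = card (W v) - card (VS v (F v))"
      using fVS VSW by (simp add: card_Diff_subset)
    finally have "card {u \<in> N. bad q c F u v} \<le> 1 + d p + (card (W v) - card (VS v (F v)))"
      unfolding d_def deg_def by simp
    then show ?thesis using cW[OF v(1,2)] cG[OF v(1,2)] GF[OF v(1)] by linarith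
  qed
  have NN: "bad q c F u v \<longleftrightarrow> bad q c x u v" if "u \<in> N" "v \<in> N" for u v
  proof -
    have Fu: "F u = a u" and Fv: "F v = a v" using that unfolding N_def B_def by auto
    have 1: "q dvd (F u - (x u - x p))" unfolding Fu a_def by (rule moddvd)
    have 2: "q dvd (F v - (x v - x p))" unfolding Fv a_def by (rule moddvd)
    have e: "(F u - F v - c u v) - (x u - x v - c u v) = (F u - (x u - x p)) - (F v - (x v - x p))" by simp
    have "q dvd ((F u - F v - c u v) - (x u - x v - c u v))" unfolding e using 1 2 by (rule dvd_diff)
    then show ?thesis unfolding bad_def cong_iff_dvd_diff using dvd_iff_of_diff by blast
  qed
  have U: "N \<union> B = {..<n}" "N \<inter> B = {}" unfolding N_def B_def by auto
  have fN: "finite N" unfolding N_def by simp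
  have fB: "finite B" unfolding B_def by simp
  define S where "S z X Y = (\<Sum>v\<in>Y. card {u\<in>X. bad q c z u v})" for z X Y
  have sw: "S z N B = S z B N" for z unfolding S_def
    by (rule sum_card_swap[OF fN fB]) (use bad_sym[OF val] U in auto)
  have tot: "2 * violations q n c z = S z N N + 2 * S z N B + S z B B" for z
    using split4[OF U, of "bad q c z"] sum_deg[OF val, of z] sw[of z] unfolding deg_def S_def by simp
  have eNN: "S F N N = S x N N" unfolding S_def using NN by (intro sum.cong refl arg_cong[where f=card]) auto
  have "S F N B \<le> (\<Sum>v\<in>B. d v + (2 * d p + 1))" unfolding S_def using Nbound by (intro sum_mono) auto
  also have "\<dots> = (\<Sum>v\<in>B. d v) + (\<Sum>v\<in>B. 2 * d p + 1)" by (rule sum.distrib)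
  also have "(\<Sum>v\<in>B. 2 * d p + 1) = card B * (2 * d p + 1)" by simp
  also have "(\<Sum>v\<in>B. d v) = S x N B + S x B B" unfolding S_def d_def deg_def
    using split2[OF U] by (simp add: sum.distrib)
  finally have eNB: "S F N B \<le> S x N B + S x B B + card B * (2 * d p + 1)" .
  have bb: "S z B B \<le> card B * card B" for z unfolding S_def
    using sum_bounded_above[of B "\<lambda>v. card {u\<in>B. bad q c z u v}" "card B"] fB
    by (simp add: card_mono)
  have vF2: "2 * violations q n c F \<le> 2 * OP + 2 * (card B * card B) + 2 * (card B * (2 * d p + 1))"
    using tot[of F] tot[of x] eNN eNB bb[of F] bb[of x] xO unfolding OP_def by linarith
  have "card B * (n - 2) = (\<Sum>v\<in>B. n - 2)" by simp
  also have "\<dots> \<le> (\<Sum>v\<in>B. 2 * (d v + d p))" using Bbound by (intro sum_mono) auto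
  also have "\<dots> = 2 * (\<Sum>v\<in>B. d v) + 2 * (card B * d p)" by (simp add: sum.distrib sum_distrib_left)
  also have "(\<Sum>v\<in>B. d v) \<le> (\<Sum>v<n. d v)" using U by (intro sum_mono2) auto
  finally have fB2: "card B * (n - 2) \<le> 4 * OP + 2 * card B * d p" using sd by simp
  have "voting_output_cost q n c Fs \<le> violations q n c F"
    unfolding voting_output_cost_def F_def using p(1) by (intro Min_le) auto
  moreover have "card B \<le> n" using U by (metis card_lessThan card_mono finite_lessThan Un_upper2)
  ultimately show ?thesis using nD fB2 vF2 unfolding OP_def
    by (intro exI[of _ "d p"] exI[of _ "card B"]) auto
qed



lemma arith_main:
  fixes n OP D b C :: nat and m e \<nu> :: real
  assumes n: "101 \<le> n" and h1: "n * D \<le> 2 * OP" and h2: "b * (n - 2) \<le> 4 * OP + 2 * b * D"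
    and h3: "C \<le> OP + b * b + b * (2 * D + 1)" and h4: "b \<le> n"
    and m: "m = real n * (real n - 1) / 2" and e: "e = real OP / m" and e4: "e < 1/4"
    and nu: "\<nu> = 2 / (1 - 2 * e)"
  shows "real C \<le> (e + 2 * e^2 * \<nu> * (2 + \<nu>) + 100 / real n) * m"
proof -
  define N where "N = real n"
  define s where "s = N - 1"
  have N1: "N \<ge> 101" using n unfolding N_def by simp
  have s1: "s \<ge> 100" using N1 unfolding s_def by simp
  have "N * (N - 1) > 0" using N1 by (intro mult_pos_pos) auto
  then have mpos: "m > 0" using m unfolding N_def by simp
  have mNs: "m = N * s / 2" using m unfolding N_def s_def by simp
  have OPe: "real OP = e * m" using e mpos by simp
  have e0: "e \<ge> 0" using e mpos by simp
  define t where "t = 1 - 2 * e"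
  have t2: "t > 1/2" using e4 unfolding t_def by simp
  define w where "w = e * \<nu>"
  have tne: "t \<noteq> 0" using t2 by simp
  have nut: "\<nu> * t = 2" using nu tne unfolding t_def[symmetric] by simp
  have wt: "w * t = 2 * e" using nut unfolding w_def by (metis mult.assoc mult.commute)
  have w0: "w \<ge> 0" using e0 nu t2 unfolding w_def t_def by simp
  have w1: "w < 1"
  proof -
    have "w * t < 1 * t" using wt e4 t2 unfolding t_def by simp
    then show ?thesis using t2 by (simp add: mult_less_cancel_right)
  qed
  have h1r: "N * real D \<le> 2 * real OP" using h1 unfolding N_def by (metis of_nat_le_iff of_nat_mult of_nat_numeral)
  have Ds: "real D \<le> e * s"
  proof -
    have "N * real D \<le> N * (e * s)" using h1r OPe mNs by (simp add: mult.left_commute)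
    then show ?thesis using N1 by (simp add: mult_le_cancel_left)
  qed
  have h2r: "real b * (N - 2) \<le> 4 * real OP + 2 * real b * real D"
  proof -
    have "real (b * (n - 2)) \<le> real (4 * OP + 2 * b * D)" using h2 by (rule of_nat_mono)
    moreover have "real (n - 2) = N - 2" using n unfolding N_def by simp
    ultimately show ?thesis by simp
  qed
  have b0: "real b \<ge> 0" by simp
  have bts: "real b * (t * s - 1) \<le> w * t * N * s"
  proof -
    have "real b * (t * s - 1) = real b * (N - 2) - 2 * real b * (e * s)" unfolding t_def s_def by (simp add: algebra_simps)
    also have "\<dots> \<le> real b * (N - 2) - 2 * real b * real D" using Ds b0 by (simp add: mult_left_mono)
    also have "\<dots> \<le> 4 * real OP" using h2r by simp
    also have "\<dots> = w * t * N * s" unfolding OPe mNs wt by (simp add: algebra_simps)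
    finally show ?thesis .
  qed
  have ts: "t * s \<ge> s / 2" using t2 s1 by (simp add: mult_right_mono)
  have tsp: "t * s - 1 > 0" using ts s1 by linarith
  have wN: "w * N \<le> 5 * (t * s - 1)"
  proof -
    have "w * N \<le> N" using w1 w0 N1 by (simp add: mult_left_le_one_le)
    also have "\<dots> \<le> 5 * (t * s - 1)"
    proof -
      have "\<And>T. s / 2 \<le> T \<Longrightarrow> N \<le> 5 * (T - 1)" using s1 unfolding s_def by simp
      then show ?thesis using ts by blast
    qed
    finally show ?thesis .
  qed
  have bb: "real b \<le> w * N + 5"
  proof -
    have "real b * (t * s - 1) \<le> (w * N + 5) * (t * s - 1)"
    proof -
      have "w * t * N * s = w * N * (t * s - 1) + w * N" by (simp add: algebra_simps)
      then show ?thesis using bts wN by (simp add: algebra_simps)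
    qed
    then show ?thesis using tsp by (simp add: mult_le_cancel_right)
  qed
  have b2: "real b * real b \<le> w^2 * N * s + 12 * N + 25"
  proof -
    have "real b * real b \<le> (w * N + 5) * (w * N + 5)" using bb b0 by (intro mult_mono) auto
    also have "\<dots> = w^2 * N * s + w^2 * N + 10 * (w * N) + 25" unfolding s_def by (simp add: algebra_simps power2_eq_square)
    also have "\<dots> \<le> w^2 * N * s + N + 10 * N + 25"
    proof -
      have "w^2 \<le> 1" using w0 w1 by (simp add: power_le_one)
      then have "w^2 * N \<le> N" using N1 by (simp add: mult_left_le_one_le)
      moreover have "w * N \<le> N" using w1 w0 N1 by (simp add: mult_left_le_one_le)
      ultimately show ?thesis by simp
    qed
    finally show ?thesis using N1 by linarith
  qed
  have bD: "2 * real b * real D \<le> 2 * w * e * N * s + 3 * s"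
  proof -
    have "2 * real b * real D \<le> 2 * (w * N + 5) * (e * s)"
      using bb Ds b0 e0 s1 by (intro mult_mono) auto
    also have "\<dots> = 2 * w * e * N * s + 10 * e * s" by (simp add: algebra_simps)
    also have "10 * e * s \<le> 3 * s" using e4 s1 by simp
    finally show ?thesis by simp
  qed
  have Cr: "real C \<le> real OP + real b * real b + 2 * real b * real D + real b"
  proof -
    have "real C \<le> real (OP + b * b + b * (2 * D + 1))" using h3 by (rule of_nat_mono)
    then show ?thesis by (simp add: algebra_simps)
  qed
  have bN: "real b \<le> N" using h4 unfolding N_def by simp
  have rhs: "(e + 2 * e^2 * \<nu> * (2 + \<nu>) + 100 / real n) * m = e * m + 2 * w * e * N * s + w^2 * N * s + 50 * s"
  proof -
    have "2 * e^2 * \<nu> * (2 + \<nu>) * m = 2 * w * e * N * s + w^2 * N * s"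
      unfolding mNs w_def by (simp add: algebra_simps power2_eq_square)
    moreover have "100 / real n * m = 50 * s" unfolding mNs N_def[symmetric] using N1 by simp
    ultimately show ?thesis by (simp add: algebra_simps)
  qed
  show ?thesis unfolding rhs using Cr b2 bD bN OPe s_def N1 by simp
qed



lemma choose2_real: "real (n choose 2) = real n * (real n - 1) / 2"
proof (induction n)
  case 0 then show ?case by simp
next
  case (Suc n)
  have "Suc n choose 2 = (n choose 1) + (n choose 2)" using binomial_Suc_Suc[of n 1] by (simp only: Suc_1)
  then have "real (Suc n choose 2) = real n + real (n choose 2)" by simp
  then show ?case unfolding Suc.IH by (simp add: field_simps)
qed

theorem lemma1:
  shows "\<exists>g :: nat \<Rightarrow> real. g \<longlonglongrightarrow> 0 \<and>
    (\<forall>n q c Fs. 0 < n \<longrightarrow> valid_instance q n c \<longrightarrow>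
       (\<forall>p<n. voting_final q n c p (Fs p)) \<longrightarrow>
       (let m = real (n choose 2);
            \<epsilon> = real (opt_val q n c) / m;
            \<nu> = 2 / (1 - 2 * \<epsilon>)
        in \<epsilon> < 1/2 \<longrightarrow>
           real (voting_output_cost q n c Fs) \<le> (\<epsilon> + 2 * \<epsilon>^2 * \<nu> * (2 + \<nu>) + g n) * m))"
proof (intro exI conjI allI impI)
  show "(\<lambda>n. 100 / real n) \<longlonglongrightarrow> 0" by (rule lim_const_over_n)
next
  fix n q c Fs
  assume n0: "0 < n" and val: "valid_instance q n c" and vf: "\<forall>p<n. voting_final q n c p (Fs p)"
  define m where "m = real (n choose 2)"
  define e where "e = real (opt_val q n c) / m"
  define \<nu> where "\<nu> = 2 / (1 - 2 * e)"
  define C where "C = voting_output_cost q n c Fs"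
  show "let m = real (n choose 2);
            \<epsilon> = real (opt_val q n c) / m;
            \<nu> = 2 / (1 - 2 * \<epsilon>)
        in \<epsilon> < 1/2 \<longrightarrow>
           real (voting_output_cost q n c Fs) \<le> (\<epsilon> + 2 * \<epsilon>^2 * \<nu> * (2 + \<nu>) + 100 / real n) * m"
    unfolding Let_def m_def[symmetric] e_def[symmetric] \<nu>_def[symmetric] C_def[symmetric]
  proof
    assume e2: "e < 1/2"
    have m0: "m \<ge> 0" unfolding m_def by simp
    have e0: "e \<ge> 0" unfolding e_def m_def by simp
    have nu0: "\<nu> > 0" unfolding \<nu>_def using e2 by simp
    have Cm: "real C \<le> m"
    proof -
      have "C \<le> violations q n c (Fs 0)"
        unfolding C_def voting_output_cost_def using n0 by (intro Min_le) auto
      also have "\<dots> \<le> n choose 2" by (rule viol_le)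
      finally show ?thesis unfolding m_def by simp
    qed
    have trivial: "real C \<le> (e + 2 * e^2 * \<nu> * (2 + \<nu>) + 100 / real n) * m"
      if K: "1 \<le> e + 2 * e^2 * \<nu> * (2 + \<nu>) + 100 / real n"
    proof -
      have "real C \<le> 1 * m" using Cm by simp
      also have "\<dots> \<le> (e + 2 * e^2 * \<nu> * (2 + \<nu>) + 100 / real n) * m"
        using K m0 by (rule mult_right_mono)
      finally show ?thesis .
    qed
    have T0: "0 \<le> 2 * e^2 * \<nu> * (2 + \<nu>)" using nu0 by simp
    have N0: "0 \<le> 100 / real n" by simp
    show "real C \<le> (e + 2 * e^2 * \<nu> * (2 + \<nu>) + 100 / real n) * m"
    proof (cases "n \<le> 100")
      case True
      then have "1 \<le> 100 / real n" using n0 by (simp add: field_simps)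
      then show ?thesis using T0 e0 by (intro trivial) linarith
    next
      case False
      then have n101: "101 \<le> n" by simp
      show ?thesis
      proof (cases "e < 1/4")
        case False
        have t: "1 - 2 * e > 0" using e2 by simp
        have w1: "e * \<nu> \<ge> 1"
        proof -
          have "e * \<nu> = 2 * e / (1 - 2 * e)" unfolding \<nu>_def by simp
          also have "\<dots> \<ge> 1" using t False by (simp add: field_simps)
          finally show ?thesis .
        qed
        have "2 * e^2 * \<nu> * (2 + \<nu>) \<ge> 2 * (e * \<nu>) * (e * \<nu>)"
        proof -
          have "2 * e^2 * \<nu> * (2 + \<nu>) = 2 * (e * \<nu>) * (e * \<nu>) + 4 * e^2 * \<nu>"
            by (simp add: algebra_simps power2_eq_square)
          moreover have "4 * e^2 * \<nu> \<ge> 0" using nu0 by simp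
          ultimately show ?thesis by linarith
        qed
        moreover have "1 * 1 \<le> (e * \<nu>) * (e * \<nu>)" using w1 by (intro mult_mono) auto
        ultimately have "1 \<le> 2 * e^2 * \<nu> * (2 + \<nu>)" by linarith
        then show ?thesis using e0 N0 by (intro trivial) linarith
      next
        case True
        have n2: "2 \<le> n" using n101 by simp
        obtain D b where h1: "n * D \<le> 2 * opt_val q n c"
          and h2: "b * (n - 2) \<le> 4 * opt_val q n c + 2 * b * D"
          and h3: "C \<le> opt_val q n c + b * b + b * (2 * D + 1)" and h4: "b \<le> n"
          using comb[OF val n2 vf] unfolding C_def by blast
        have mm: "m = real n * (real n - 1) / 2" unfolding m_def by (rule choose2_real)
        show ?thesis
          by (rule arith_main[OF n101 h1 h2 h3 h4 mm e_def True \<nu>_def])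
      qed
    qed
  qed
qed

end
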